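(* Let $G$ be a connected graph with $n$ vertices, $k$ a positive integer, $\tau=\{1,\dots,k\}$, and $f:\tau\to\mathbb{Q}_{\ge1}$ a fitness function with $f(1)<f(2)<\dots<f(k)$. Let $M_0\in\Omega_0(G,\tau)$ and $M=M(G,\tau,f,M_0)$. Then for every $j\in\{2,\dots,k\}$, $\mathbb{E}(A_{\ge j})\le\sum_{i=j}^k\frac{f(i)}{f(i)-f(i-1)}(n+1)n^3$.
   Context: For $G=(V,E)$, $N(v)$ is the neighbourhood of $v$. For a state $S:V\to\tau$, $S|_{v\to w}$ equals $S$ except $w$ gets type $S(v)$. The Moran process $M(G,\tau,f,M_0)$: Markov chain on states from $M_0$; given $M_t$, choose $v$ with probability $f(M_t(v))/\sum_uf(M_t(u))$, then $w\in N(v)$ uniformly, set $M_{t+1}=M_t|_{v\to w}$. $V_i(t)=\{v:M_t(v)=i\}$. $\Omega_0(G,\tau)$ is the set of states with range $\tau$. For $j\in\{2,\dots,k\}$, $A_{\ge j}=\min\{t\in\mathbb{Z}_{\ge0}: \bigcup_{i\ge j}V_i(t)=\emptyset \text{ or } V_i(t)=V\text{ for some } i\ge j\}$. *)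

theory Defs
  imports "HOL-Probability.Probability"
begin

text \<open>A graph is given by a finite vertex set V and a symmetric irreflexive
  edge relation E on V. States are maps from vertices to types (natural numbers);
  only the values on V matter.\<close>

definition simple_graph :: "'a set \<Rightarrow> ('a \<Rightarrow> 'a \<Rightarrow> bool) \<Rightarrow> bool" where
  "simple_graph V E \<longleftrightarrow> finite V \<and> (\<forall>u v. E u v \<longrightarrow> u \<in> V \<and> v \<in> V)
     \<and> (\<forall>u v. E u v \<longrightarrow> E v u) \<and> (\<forall>v. \<not> E v v)"

definition connected_graph :: "'a set \<Rightarrow> ('a \<Rightarrow> 'a \<Rightarrow> bool) \<Rightarrow> bool" where
  "connected_graph V E \<longleftrightarrow> V \<noteq> {} \<and> (\<forall>u\<in>V. \<forall>v\<in>V. E\<^sup>*\<^sup>* u v)"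

definition nbhd :: "'a set \<Rightarrow> ('a \<Rightarrow> 'a \<Rightarrow> bool) \<Rightarrow> 'a \<Rightarrow> 'a set" where
  "nbhd V E v = {w \<in> V. E v w}"

definition Omega0 :: "'a set \<Rightarrow> nat \<Rightarrow> ('a \<Rightarrow> nat) set" where
  "Omega0 V k = {S. \<forall>v\<in>V. S v \<in> {1..k}}"

definition moran_step :: "'a set \<Rightarrow> ('a \<Rightarrow> 'a \<Rightarrow> bool) \<Rightarrow> (nat \<Rightarrow> rat) \<Rightarrow> ('a \<Rightarrow> nat) \<Rightarrow> ('a \<Rightarrow> nat) pmf" where
  "moran_step V E f S =
     bind_pmf (embed_pmf (\<lambda>v. if v \<in> V then real_of_rat (f (S v)) / (\<Sum>u\<in>V. real_of_rat (f (S u))) else 0))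
       (\<lambda>v. bind_pmf (pmf_of_set (nbhd V E v)) (\<lambda>w. return_pmf (S(w := S v))))"

primrec moran_paths :: "'a set \<Rightarrow> ('a \<Rightarrow> 'a \<Rightarrow> bool) \<Rightarrow> (nat \<Rightarrow> rat) \<Rightarrow> ('a \<Rightarrow> nat) \<Rightarrow> nat \<Rightarrow> ('a \<Rightarrow> nat) list pmf" where
  "moran_paths V E f M0 0 = return_pmf [M0]"
| "moran_paths V E f M0 (Suc t) =
     bind_pmf (moran_paths V E f M0 t) (\<lambda>xs. map_pmf (\<lambda>y. xs @ [y]) (moran_step V E f (last xs)))"

definition stop_ge :: "'a set \<Rightarrow> nat \<Rightarrow> ('a \<Rightarrow> nat) \<Rightarrow> bool" where
  "stop_ge V j S \<longleftrightarrow> {v \<in> V. S v \<ge> j} = {} \<or> (\<exists>i\<ge>j. {v \<in> V. S v = i} = V)"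

text \<open>Expectation of the hitting time A_{>=j} (a random variable with values in
  nat \<union> {\<infinity>}), via E(A) = sum_{t>=0} P(A > t), where A > t iff the stopping
  condition fails at all times 0..t.\<close>
definition expected_A_ge :: "'a set \<Rightarrow> ('a \<Rightarrow> 'a \<Rightarrow> bool) \<Rightarrow> (nat \<Rightarrow> rat) \<Rightarrow> ('a \<Rightarrow> nat) \<Rightarrow> nat \<Rightarrow> ennreal" where
  "expected_A_ge V E f M0 j =
     (\<Sum>t. ennreal (measure_pmf.prob (moran_paths V E f M0 t)
                       {xs. \<forall>s\<le>t. \<not> stop_ge V j (xs ! s)}))"

end

theory Submission imports Defs begin

lemma integral_bind_pmf_bdd:
  fixes g :: "_ \<Rightarrow> real"
  assumes "\<And>x. \<bar>g x\<bar> \<le> B"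
  shows "measure_pmf.expectation (bind_pmf M N) g = measure_pmf.expectation M (\<lambda>x. measure_pmf.expectation (N x) g)"
  unfolding measure_pmf_bind
  apply (rule integral_bind[where K="count_space UNIV" and B=B and B'=1])
  subgoal by simp
  subgoal by (rule assms)
  subgoal by (subst measurable_cong_sets[OF sets_measure_pmf_count_space refl]) (rule measurable_measure_pmf)
  subgoal by (rule measure_pmf.finite_measure_axioms)
  subgoal by (simp add: measure_pmf.emeasure_space_1)
  done

lemma expectation_bounds:
  fixes g :: "_ \<Rightarrow> real"
  assumes "\<And>x. a \<le> g x" "\<And>x. g x \<le> b"
  shows "a \<le> measure_pmf.expectation M g \<and> measure_pmf.expectation M g \<le> b"
proof -
  have bd: "\<bar>g x\<bar> \<le> max \<bar>a\<bar> \<bar>b\<bar>" for x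
  proof -
    have "a \<le> g x" "g x \<le> b" using assms by auto
    moreover have "- \<bar>a\<bar> \<le> a" "b \<le> \<bar>b\<bar>" "\<bar>a\<bar> \<le> max \<bar>a\<bar> \<bar>b\<bar>" "\<bar>b\<bar> \<le> max \<bar>a\<bar> \<bar>b\<bar>" by auto
    ultimately show ?thesis unfolding abs_le_iff by linarith
  qed
  have int: "integrable (measure_pmf M) g"
    by (rule measure_pmf.integrable_const_bound[where B="max \<bar>a\<bar> \<bar>b\<bar>"]) (auto intro!: AE_pmfI simp: bd)
  have "measure_pmf.expectation M (\<lambda>_. a) \<le> measure_pmf.expectation M g"
    by (rule integral_mono[OF _ int]) (simp_all add: assms)
  moreover have "measure_pmf.expectation M g \<le> measure_pmf.expectation M (\<lambda>_. b)"
    by (rule integral_mono[OF int]) (simp_all add: assms)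
  ultimately show ?thesis by simp
qed

lemma paths_basic:
  "xs \<in> set_pmf (moran_paths V E f M0 t) \<Longrightarrow> length xs = Suc t \<and> xs ! 0 = M0"
proof (induction t arbitrary: xs)
  case 0 then show ?case by simp
next
  case (Suc t)
  then obtain ys y where "ys \<in> set_pmf (moran_paths V E f M0 t)" "xs = ys @ [y]" by auto
  with Suc.IH[of ys] show ?case by (auto simp: nth_append)
qed

locale moran =
  fixes V :: "'a set" and E :: "'a \<Rightarrow> 'a \<Rightarrow> bool" and k j :: nat and f :: "nat \<Rightarrow> rat"
  assumes sg: "simple_graph V E" and cg: "connected_graph V E" and two: "2 \<le> card V"
    and fpos: "\<forall>i\<in>{1..k}. f i \<ge> 1" and finc: "\<forall>i. 1 \<le> i \<and> i < k \<longrightarrow> f i < f (i + 1)"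
    and jk: "j \<in> {2..k}"
begin

definition "F a = real_of_rat (f a)"
definition "N v = nbhd V E v"
definition "d v = real (card (N v))"
definition "c i = real_of_rat (f i / (f i - f (i - 1)))"
definition "C = (\<Sum>i=j..k. c i)"
definition "g a = (\<Sum>i=j..k. c i * (if i \<le> a then 1 else 0))"
definition "Psi S = (\<Sum>x\<in>V. g (S x) / d x)"
definition "W S = (\<Sum>u\<in>V. F (S u))"
definition "p S v = (if v \<in> V then F (S v) / W S else 0)"
definition "n = card V"

lemma finV: "finite V" using sg by (simp add: simple_graph_def)

lemma N_sub: "N v \<subseteq> V" by (auto simp: N_def nbhd_def)

lemma N_fin: "finite (N v)" using finite_subset[OF N_sub finV] .

lemma E_in: "E u v \<Longrightarrow> u \<in> V \<and> v \<in> V" using sg by (simp add: simple_graph_def)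
lemma E_sym: "E u v \<Longrightarrow> E v u" using sg by (simp add: simple_graph_def)
lemma E_irr: "\<not> E v v" using sg by (simp add: simple_graph_def)

lemma N_ne: assumes "v \<in> V" shows "N v \<noteq> {}"
proof -
  have "V \<noteq> {v}" using two by auto
  then obtain y where y: "y \<in> V" "y \<noteq> v" using assms by blast
  have "E\<^sup>*\<^sup>* v y" using cg assms y by (simp add: connected_graph_def)
  then obtain z where "E v z" using y(2) by (metis converse_rtranclpE)
  then show ?thesis using E_in by (auto simp: N_def nbhd_def)
qed

lemma d_ge1: "v \<in> V \<Longrightarrow> 1 \<le> d v"
  using N_ne N_fin by (simp add: d_def Suc_le_eq card_gt_0_iff)

lemma d_le_n: "d v \<le> n"
  using card_mono[OF finV N_sub] by (simp add: d_def n_def)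

lemma n_ge2: "2 \<le> n" using two by (simp add: n_def)

lemma f_mono_aux: "1 \<le> a \<Longrightarrow> a \<le> b \<Longrightarrow> b \<le> k \<Longrightarrow> f a \<le> f b"
proof (induction b)
  case 0 then show ?case by simp
next
  case (Suc b)
  show ?case
  proof (cases "a = Suc b")
    case False
    then have "a \<le> b" using Suc by simp
    then have "f a \<le> f b" using Suc by simp
    also have "f b < f (b + 1)" using finc Suc.prems \<open>a \<le> b\<close> by simp
    finally show ?thesis by simp
  qed simp
qed

lemma F_mono: "1 \<le> a \<Longrightarrow> a \<le> b \<Longrightarrow> b \<le> k \<Longrightarrow> F a \<le> F b"
  using f_mono_aux by (simp add: F_def of_rat_less_eq)

lemma F_strict: "1 \<le> a \<Longrightarrow> a < b \<Longrightarrow> b \<le> k \<Longrightarrow> F a < F b"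
proof -
  assume h: "1 \<le> a" "a < b" "b \<le> k"
  have "f a < f (a + 1)" using finc h by simp
  also have "f (a+1) \<le> f b" using f_mono_aux h by simp
  finally show ?thesis by (simp add: F_def of_rat_less)
qed

lemma F_ge1: "a \<in> {1..k} \<Longrightarrow> 1 \<le> F a"
  using fpos by (auto simp: F_def)

lemma c_prop: assumes "i \<in> {j..k}" shows "0 \<le> c i \<and> c i * (F i - F (i - 1)) = F i"
proof -
  have i: "2 \<le> i" "i \<le> k" using assms jk by auto
  have "1 \<le> i - 1 \<and> i - 1 < k" using i by auto
  then have "f (i - 1) < f (i - 1 + 1)" using finc by blast
  then have lt: "f (i - 1) < f i" using i by simp
  have f1: "1 \<le> f i" using fpos i by auto
  have pos: "0 < f i" using f1 by (meson less_le_trans zero_less_one)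
  have q0: "0 \<le> f i / (f i - f (i - 1))"
    by (rule divide_nonneg_pos) (use lt pos in auto)
  have eq: "f i / (f i - f (i - 1)) * (f i - f (i - 1)) = f i" using lt by simp
  have "0 \<le> c i" unfolding c_def using q0 by (simp only: zero_le_of_rat_iff)
  moreover have "c i * (F i - F (i - 1)) = real_of_rat (f i / (f i - f (i - 1)) * (f i - f (i - 1)))"
    unfolding c_def F_def by (simp only: of_rat_mult of_rat_diff)
  ultimately show ?thesis unfolding eq F_def by simp
qed

lemma c_nonneg: "i \<in> {j..k} \<Longrightarrow> 0 \<le> c i" using c_prop by blast

lemma C_nonneg: "0 \<le> C" unfolding C_def by (rule sum_nonneg) (use c_nonneg in auto)

lemma g_bounds: "0 \<le> g a \<and> g a \<le> C"
  unfolding g_def C_def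
  by (auto intro!: sum_nonneg sum_mono simp: c_nonneg)

lemma g_mono: "a \<le> b \<Longrightarrow> g a \<le> g b"
  unfolding g_def by (auto intro!: sum_mono simp: c_nonneg)

lemma g_gap: assumes "m \<in> {j..k}" "b < m" shows "c m \<le> g m - g b"
proof -
  have "g m - g b = (\<Sum>i=j..k. c i * ((if i \<le> m then 1 else 0) - (if i \<le> b then 1 else 0)))"
    unfolding g_def by (simp add: sum_subtractf[symmetric] algebra_simps)
  also have "\<dots> \<ge> c m * ((if m \<le> m then 1 else 0) - (if m \<le> b then 1 else 0))"
    by (rule member_le_sum) (use assms c_nonneg in auto)
  finally show ?thesis using assms by simp
qed

lemma Psi_bounds: "0 \<le> Psi S \<and> Psi S \<le> C * n"
proof
  show "0 \<le> Psi S" unfolding Psi_def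
    by (intro sum_nonneg divide_nonneg_nonneg) (auto simp: g_bounds d_def)
  have "Psi S \<le> (\<Sum>x\<in>V. C)" unfolding Psi_def
  proof (rule sum_mono)
    fix x assume "x \<in> V"
    then have d1: "1 \<le> d x" by (rule d_ge1)
    then have dp: "0 < d x" by linarith
    have "C \<le> C * d x" using C_nonneg d1 by (simp add: mult_le_cancel_left1)
    then have "g (S x) \<le> C * d x" using g_bounds[of "S x"] by linarith
    then show "g (S x) / d x \<le> C" using dp by (simp add: divide_le_eq)
  qed
  then show "Psi S \<le> C * n" by (simp add: n_def mult.commute)
qed

lemma Psi_abs: "\<bar>Psi S\<bar> \<le> C * n" using Psi_bounds by simp

lemma Psi_upd: assumes "w \<in> V" shows "Psi (S(w := a)) = Psi S + (g a - g (S w)) / d w"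
proof -
  have "Psi (S(w := a)) = g a / d w + (\<Sum>x\<in>V - {w}. g (S x) / d x)"
    unfolding Psi_def using assms finV by (simp add: sum.remove)
  moreover have "Psi S = g (S w) / d w + (\<Sum>x\<in>V - {w}. g (S x) / d x)"
    unfolding Psi_def using assms finV by (simp add: sum.remove)
  ultimately show ?thesis by (simp add: diff_divide_distrib)
qed


lemma Om: "S \<in> Omega0 V k \<Longrightarrow> v \<in> V \<Longrightarrow> S v \<in> {1..k}" by (simp add: Omega0_def)

lemma W_pos: assumes "S \<in> Omega0 V k" shows "0 < W S"
proof -
  have "V \<noteq> {}" using n_ge2 by (auto simp: n_def)
  then obtain v where "v \<in> V" by blast
  have "F (S v) \<le> W S" unfolding W_def
  proof (rule member_le_sum)
    fix x assume "x \<in> V - {v}"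
    then have "1 \<le> F (S x)" using F_ge1 Om[OF assms] by blast
    then show "0 \<le> F (S x)" by linarith
  qed (use \<open>v \<in> V\<close> finV in auto)
  moreover have "1 \<le> F (S v)" using F_ge1 Om[OF assms \<open>v \<in> V\<close>] .
  ultimately show ?thesis by simp
qed

lemma p_nonneg: "S \<in> Omega0 V k \<Longrightarrow> 0 \<le> p S v"
proof -
  assume S: "S \<in> Omega0 V k"
  show "0 \<le> p S v"
  proof (cases "v \<in> V")
    case True
    have "1 \<le> F (S v)" using F_ge1 Om[OF S True] .
    then show ?thesis using W_pos[OF S] True by (simp add: p_def)
  qed (simp add: p_def)
qed

lemma p_sum: "S \<in> Omega0 V k \<Longrightarrow> (\<Sum>v\<in>V. p S v) = 1"
  using W_pos[of S] by (simp add: p_def sum_divide_distrib[symmetric] W_def)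

lemma p_prob: assumes "S \<in> Omega0 V k" shows "(\<integral>\<^sup>+v. ennreal (p S v) \<partial>count_space UNIV) = 1"
proof -
  have "(\<integral>\<^sup>+v. ennreal (p S v) \<partial>count_space UNIV) = (\<Sum>v\<in>V. ennreal (p S v))"
    by (rule nn_integral_count_space') (auto simp: finV p_def)
  also have "\<dots> = ennreal (\<Sum>v\<in>V. p S v)" using p_nonneg[OF assms] by (simp add: sum_ennreal)
  finally show ?thesis using p_sum[OF assms] by simp
qed

lemma step_def': "moran_step V E f S = bind_pmf (embed_pmf (p S)) (\<lambda>v. map_pmf (\<lambda>w. S(w := S v)) (pmf_of_set (N v)))"
proof -
  have "p S = (\<lambda>v. if v \<in> V then real_of_rat (f (S v)) / (\<Sum>u\<in>V. real_of_rat (f (S u))) else 0)"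
    by (auto simp: p_def F_def W_def)
  then show ?thesis by (simp add: moran_step_def map_pmf_def N_def)
qed

lemma step_set: assumes "S \<in> Omega0 V k" shows "set_pmf (moran_step V E f S) \<subseteq> Omega0 V k"
proof
  fix y assume "y \<in> set_pmf (moran_step V E f S)"
  then obtain v w where v: "v \<in> set_pmf (embed_pmf (p S))" and w: "w \<in> set_pmf (pmf_of_set (N v))"
    and y: "y = S(w := S v)"
    unfolding step_def' by auto
  have "p S v \<noteq> 0" using v set_embed_pmf[OF p_nonneg[OF assms] p_prob[OF assms]] by auto
  then have "v \<in> V" by (auto simp: p_def split: if_splits)
  then show "y \<in> Omega0 V k" using assms y by (auto simp: Omega0_def)
qed

lemma step_exp: assumes "S \<in> Omega0 V k"
  shows "measure_pmf.expectation (moran_step V E f S) Psi = (\<Sum>v\<in>V. p S v * ((\<Sum>w\<in>N v. Psi (S(w := S v))) / d v))"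
proof -
  have "measure_pmf.expectation (moran_step V E f S) Psi =
     measure_pmf.expectation (embed_pmf (p S)) (\<lambda>v. measure_pmf.expectation (map_pmf (\<lambda>w. S(w := S v)) (pmf_of_set (N v))) Psi)"
    unfolding step_def' by (rule integral_bind_pmf_bdd[OF Psi_abs])
  also have "\<dots> = (\<Sum>v\<in>V. measure_pmf.expectation (map_pmf (\<lambda>w. S(w := S v)) (pmf_of_set (N v))) Psi * pmf (embed_pmf (p S)) v)"
    by (rule integral_measure_pmf_real)
       (use finV set_embed_pmf[OF p_nonneg[OF assms] p_prob[OF assms]] in \<open>auto simp: p_def split: if_splits\<close>)
  also have "\<dots> = (\<Sum>v\<in>V. p S v * ((\<Sum>w\<in>N v. Psi (S(w := S v))) / d v))"
  proof (rule sum.cong)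
    fix v assume "v \<in> V"
    then show "measure_pmf.expectation (map_pmf (\<lambda>w. S(w := S v)) (pmf_of_set (N v))) Psi * pmf (embed_pmf (p S)) v
       = p S v * ((\<Sum>w\<in>N v. Psi (S(w := S v))) / d v)"
      using pmf_embed_pmf[OF p_nonneg[OF assms] p_prob[OF assms]] N_ne N_fin
      by (simp add: integral_pmf_of_set d_def)
  qed simp
  finally show ?thesis .
qed


lemma sum_swap_N: "(\<Sum>v\<in>V. \<Sum>w\<in>N v. h v w) = (\<Sum>v\<in>V. \<Sum>w\<in>N v. (h w v :: real))"
proof -
  have fin: "\<forall>v\<in>V. finite (N v)" using N_fin by blast
  have sw: "prod.swap ` Sigma V N = Sigma V N"
    by (auto simp: N_def nbhd_def image_iff intro: E_sym)
  have "(\<Sum>v\<in>V. \<Sum>w\<in>N v. h v w) = (\<Sum>(v,w)\<in>Sigma V N. h v w)" by (rule sum.Sigma[OF finV fin])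
  also have "\<dots> = (\<Sum>(v,w)\<in>prod.swap ` Sigma V N. h w v)"
    by (subst sum.reindex) (auto simp: case_prod_beta)
  also have "\<dots> = (\<Sum>v\<in>V. \<Sum>w\<in>N v. h w v)" unfolding sw by (rule sum.Sigma[OF finV fin, symmetric])
  finally show ?thesis .
qed

lemma edge_exists: "E\<^sup>*\<^sup>* u y \<Longrightarrow> S u = m \<Longrightarrow> S y \<noteq> m \<Longrightarrow> \<exists>a b. E a b \<and> S a = m \<and> S b \<noteq> m"
proof (induction rule: rtranclp_induct)
  case base then show ?case by simp
next
  case (step y z)
  then show ?case by (cases "S y = m") auto
qed

definition "DD S v w = F (S v) * (g (S v) - g (S w)) / (d v * d w)"
definition "TT S v w = (F (S v) - F (S w)) * (g (S v) - g (S w)) / (d v * d w)"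

lemma TT_nonneg: assumes "S \<in> Omega0 V k" "v \<in> V" "w \<in> V" shows "0 \<le> TT S v w"
proof -
  have "0 < d v" "0 < d w" using d_ge1[of v] d_ge1[of w] assms by auto
  then have dpos: "0 < d v * d w" by simp
  have "0 \<le> (F (S v) - F (S w)) * (g (S v) - g (S w))"
  proof (cases "S v \<le> S w")
    case True
    then show ?thesis using F_mono g_mono Om[OF assms(1)] assms
      by (intro mult_nonpos_nonpos) (auto simp: atLeastAtMost_iff)
  next
    case False
    then show ?thesis using F_mono g_mono Om[OF assms(1)] assms
      by (intro mult_nonneg_nonneg) (auto simp: atLeastAtMost_iff)
  qed
  then show ?thesis unfolding TT_def using dpos by simp
qed

lemma exp_formula: assumes S: "S \<in> Omega0 V k"
  shows "measure_pmf.expectation (moran_step V E f S) Psi = Psi S + (\<Sum>v\<in>V. \<Sum>w\<in>N v. DD S v w) / W S"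
proof -
  have Wp: "0 < W S" using W_pos[OF S] .
  have "\<And>v. v \<in> V \<Longrightarrow> p S v * ((\<Sum>w\<in>N v. Psi (S(w := S v))) / d v)
      = p S v * Psi S + (\<Sum>w\<in>N v. DD S v w) / W S"
  proof -
    fix v assume v: "v \<in> V"
    have dv: "0 < d v" using d_ge1[OF v] by simp
    have "(\<Sum>w\<in>N v. Psi (S(w := S v))) = (\<Sum>w\<in>N v. Psi S + (g (S v) - g (S w)) / d w)"
      by (rule sum.cong[OF refl], rule Psi_upd) (use N_sub in blast)
    also have "\<dots> = d v * Psi S + (\<Sum>w\<in>N v. (g (S v) - g (S w)) / d w)"
      by (simp add: sum.distrib d_def)
    finally have "(\<Sum>w\<in>N v. Psi (S(w := S v))) / d v = Psi S + (\<Sum>w\<in>N v. (g (S v) - g (S w)) / d w) / d v"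
      using dv by (simp add: field_simps)
    moreover have "p S v * ((\<Sum>w\<in>N v. (g (S v) - g (S w)) / d w) / d v) = (\<Sum>w\<in>N v. DD S v w) / W S"
      using v by (simp add: p_def DD_def sum_divide_distrib sum_distrib_left mult_ac)
    ultimately show "p S v * ((\<Sum>w\<in>N v. Psi (S(w := S v))) / d v)
      = p S v * Psi S + (\<Sum>w\<in>N v. DD S v w) / W S"
      by (simp add: distrib_left)
  qed
  then have "(\<Sum>v\<in>V. p S v * ((\<Sum>w\<in>N v. Psi (S(w := S v))) / d v))
     = (\<Sum>v\<in>V. p S v * Psi S + (\<Sum>w\<in>N v. DD S v w) / W S)" by (rule sum.cong[OF refl])
  also have "\<dots> = Psi S + (\<Sum>v\<in>V. \<Sum>w\<in>N v. DD S v w) / W S"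
    by (simp add: sum.distrib sum_distrib_right[symmetric] p_sum[OF S] sum_divide_distrib)
  finally show ?thesis using step_exp[OF S] by simp
qed

lemma twoQ: "2 * (\<Sum>v\<in>V. \<Sum>w\<in>N v. DD S v w) = (\<Sum>v\<in>V. \<Sum>w\<in>N v. TT S v w)"
proof -
  have "2 * (\<Sum>v\<in>V. \<Sum>w\<in>N v. DD S v w) = (\<Sum>v\<in>V. \<Sum>w\<in>N v. DD S v w) + (\<Sum>v\<in>V. \<Sum>w\<in>N v. DD S w v)"
    using sum_swap_N[of "DD S"] by simp
  also have "\<dots> = (\<Sum>v\<in>V. \<Sum>w\<in>N v. DD S v w + DD S w v)" by (simp add: sum.distrib)
  also have "\<dots> = (\<Sum>v\<in>V. \<Sum>w\<in>N v. TT S v w)"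
  proof (intro sum.cong refl)
    fix v w
    have e: "F (S v) * (g (S v) - g (S w)) + F (S w) * (g (S w) - g (S v)) = (F (S v) - F (S w)) * (g (S v) - g (S w))"
      by (simp add: algebra_simps)
    have "DD S v w + DD S w v = (F (S v) * (g (S v) - g (S w)) + F (S w) * (g (S w) - g (S v))) / (d v * d w)"
      unfolding DD_def by (simp add: mult.commute[of "d w" "d v"] add_divide_distrib)
    then show "DD S v w + DD S w v = TT S v w" unfolding TT_def e .
  qed
  finally show ?thesis .
qed


lemma drift: assumes S: "S \<in> Omega0 V k"
  shows "Psi S + (if stop_ge V j S then 0 else 1 / real n ^ 3) \<le> measure_pmf.expectation (moran_step V E f S) Psi"
proof -
  let ?Q = "\<Sum>v\<in>V. \<Sum>w\<in>N v. DD S v w"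
  let ?T = "\<Sum>v\<in>V. \<Sum>w\<in>N v. TT S v w"
  have fin: "\<forall>v\<in>V. finite (N v)" using N_fin by blast
  have Wp: "0 < W S" using W_pos[OF S] .
  have T_Sig: "?T = (\<Sum>(v,w)\<in>Sigma V N. TT S v w)" by (rule sum.Sigma[OF finV fin])
  have T_nn: "\<And>x. x \<in> Sigma V N \<Longrightarrow> 0 \<le> (case x of (v, w) \<Rightarrow> TT S v w)"
    using TT_nonneg[OF S] N_sub by auto
  have Qnn: "0 \<le> ?Q"
  proof -
    have "0 \<le> ?T" unfolding T_Sig by (rule sum_nonneg) (use T_nn in blast)
    then show ?thesis using twoQ[of S] by simp
  qed
  show ?thesis
  proof (cases "stop_ge V j S")
    case True
    then show ?thesis using exp_formula[OF S] Qnn Wp by simp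
  next
    case False
    have Vne: "V \<noteq> {}" using n_ge2 by (auto simp: n_def)
    define m where "m = Max (S ` V)"
    have mmax: "\<And>v. v \<in> V \<Longrightarrow> S v \<le> m" unfolding m_def using finV by simp
    have "m \<in> S ` V" unfolding m_def using finV Vne by (intro Max_in) auto
    then obtain u where u: "u \<in> V" "S u = m" by blast
    have mk: "m \<in> {1..k}" using Om[OF S u(1)] u by simp
    have mj: "j \<le> m"
    proof (rule ccontr)
      assume "\<not> j \<le> m"
      then have "\<forall>v\<in>V. \<not> j \<le> S v" using mmax by (meson le_trans)
      then have "{v \<in> V. S v \<ge> j} = {}" by blast
      then show False using False by (simp add: stop_ge_def)
    qed
    have "{v \<in> V. S v = m} \<noteq> V"
    proof
      assume "{v \<in> V. S v = m} = V"
      then have "stop_ge V j S" unfolding stop_ge_def using mj by blast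
      then show False using False by simp
    qed
    then obtain y where y: "y \<in> V" "S y \<noteq> m" by blast
    have "E\<^sup>*\<^sup>* u y" using cg u y by (simp add: connected_graph_def)
    then have "\<exists>a b. E a b \<and> S a = m \<and> S b \<noteq> m" by (rule edge_exists[OF _ u(2) y(2)])
    then obtain a b where ab: "E a b" "S a = m" "S b \<noteq> m" by blast
    have abV: "a \<in> V" "b \<in> V" using E_in ab by auto
    have bm: "S b < m" using mmax[OF abV(2)] ab by simp
    have b1: "1 \<le> S b" using Om[OF S abV(2)] by simp
    have mjk: "m \<in> {j..k}" using mj mk by simp
    have Fm1: "F (S b) \<le> F (m - 1)" using F_mono[of "S b" "m - 1"] b1 bm mk by simp
    have cm: "0 \<le> c m" "c m * (F m - F (m - 1)) = F m" using c_prop[OF mjk] by auto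
    have gap: "c m \<le> g m - g (S b)" using g_gap[OF mjk bm] .
    have Fm_gt: "F (m - 1) < F m" using F_strict[of "m - 1" m] mj jk mk by auto
    have num: "F m \<le> (F m - F (S b)) * (g m - g (S b))"
    proof -
      have "F m = (F m - F (m - 1)) * c m" using cm by (simp add: mult.commute)
      also have "\<dots> \<le> (F m - F (S b)) * (g m - g (S b))"
        by (rule mult_mono) (use Fm1 gap cm Fm_gt in linarith)+
      finally show ?thesis .
    qed
    have da: "1 \<le> d a" "d a \<le> n" using d_ge1 d_le_n abV by auto
    have db: "1 \<le> d b" "d b \<le> n" using d_ge1 d_le_n abV by auto
    have "0 < d a" "0 < d b" using da db by linarith+
    then have dd1: "0 < d a * d b" by simp
    have dd2: "d a * d b \<le> real n * real n" by (rule mult_mono) (use da db in linarith)+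
    note dd = dd1 dd2
    have Fm_pos: "1 \<le> F m" using F_ge1[OF mk] .
    have Tab: "F m / (real n * real n) \<le> TT S a b"
    proof -
      have "F m / (real n * real n) \<le> F m / (d a * d b)"
        by (rule divide_left_mono) (use dd Fm_pos in simp_all)
      also have "\<dots> \<le> (F m - F (S b)) * (g m - g (S b)) / (d a * d b)"
        by (rule divide_right_mono) (use num dd in simp_all)
      finally show ?thesis unfolding TT_def using ab by simp
    qed
    have Tba: "TT S b a = TT S a b" unfolding TT_def by (simp add: field_simps)
    have "a \<noteq> b" using E_irr ab(1) by blast
    then have "TT S a b + TT S b a = (\<Sum>(v,w)\<in>{(a,b),(b,a)}. TT S v w)" by simp
    also have "\<dots> \<le> (\<Sum>(v,w)\<in>Sigma V N. TT S v w)"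
    proof (rule sum_mono2)
      show "finite (Sigma V N)" using finV fin by blast
      show "{(a,b),(b,a)} \<subseteq> Sigma V N" using ab abV E_sym by (auto simp: N_def nbhd_def)
      show "\<And>x. x \<in> Sigma V N - {(a,b),(b,a)} \<Longrightarrow> 0 \<le> (case x of (v, w) \<Rightarrow> TT S v w)"
        using T_nn by blast
    qed
    finally have "2 * TT S a b \<le> 2 * ?Q" using Tba twoQ[of S] T_Sig by simp
    then have Q1: "F m / (real n * real n) \<le> ?Q" using Tab by simp
    have Wle: "W S \<le> real n * F m"
    proof -
      have "W S \<le> (\<Sum>v\<in>V. F m)" unfolding W_def
      proof (rule sum_mono)
        fix v assume v: "v \<in> V"
        have "S v \<in> {1..k}" by (rule Om[OF S v])
        then show "F (S v) \<le> F m" using F_mono[of "S v" m] mmax[OF v] mk by auto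
      qed
      then show ?thesis by (simp add: n_def)
    qed
    have npos: "0 < real n" using n_ge2 by simp
    have "1 / real n ^ 3 = (F m / (real n * real n)) / (real n * F m)"
      using Fm_pos npos by (simp add: field_simps power3_eq_cube)
    also have "\<dots> \<le> ?Q / W S"
      by (rule frac_le) (use Q1 Wle Wp Qnn Fm_pos npos in linarith)+
    finally show ?thesis using False exp_formula[OF S] by simp
  qed
qed


lemma paths_om: assumes "M0 \<in> Omega0 V k"
  shows "xs \<in> set_pmf (moran_paths V E f M0 t) \<Longrightarrow> set xs \<subseteq> Omega0 V k"
proof (induction t arbitrary: xs)
  case 0 then show ?case using assms by simp
next
  case (Suc t)
  from Suc.prems obtain ys y where ys: "ys \<in> set_pmf (moran_paths V E f M0 t)" and y: "y \<in> set_pmf (moran_step V E f (last ys))"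
    and xs: "xs = ys @ [y]" by auto
  have "ys \<noteq> []" using paths_basic[OF ys] by auto
  then have "last ys \<in> set ys" by (rule last_in_set)
  then have "last ys \<in> Omega0 V k" using Suc.IH[OF ys] by blast
  then have "y \<in> Omega0 V k" using step_set y by blast
  then show ?case using Suc.IH[OF ys] xs by simp
qed

lemma integrable_bdd: fixes h :: "_ \<Rightarrow> real" assumes "\<And>x. \<bar>h x\<bar> \<le> B" shows "integrable (measure_pmf M) h"
  by (rule measure_pmf.integrable_const_bound[where B=B]) (auto intro!: AE_pmfI simp: assms)

lemma rec_step: assumes M0: "M0 \<in> Omega0 V k"
  shows "measure_pmf.expectation (moran_paths V E f M0 t) (\<lambda>xs. Psi (last xs))
      + measure_pmf.prob (moran_paths V E f M0 t) {xs. \<forall>s\<le>t. \<not> stop_ge V j (xs ! s)} / real n ^ 3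
      \<le> measure_pmf.expectation (moran_paths V E f M0 (Suc t)) (\<lambda>xs. Psi (last xs))"
proof -
  let ?D = "moran_paths V E f M0 t"
  let ?A = "{xs. \<forall>s\<le>t. \<not> stop_ge V j (xs ! s)}"
  let ?h1 = "\<lambda>xs. Psi (last xs) + indicator ?A xs / real n ^ 3"
  let ?h2 = "\<lambda>xs. measure_pmf.expectation (moran_step V E f (last xs)) Psi"
  have npos: "0 < real n" using n_ge2 by simp
  have "measure_pmf.expectation (moran_paths V E f M0 (Suc t)) (\<lambda>xs. Psi (last xs))
      = measure_pmf.expectation ?D (\<lambda>xs. measure_pmf.expectation (map_pmf (\<lambda>y. xs @ [y]) (moran_step V E f (last xs))) (\<lambda>xs. Psi (last xs)))"
    unfolding moran_paths.simps by (rule integral_bind_pmf_bdd[where B="C * n"]) (rule Psi_abs)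
  also have "\<dots> = measure_pmf.expectation ?D ?h2" by simp
  finally have eq: "measure_pmf.expectation (moran_paths V E f M0 (Suc t)) (\<lambda>xs. Psi (last xs)) = measure_pmf.expectation ?D ?h2" .
  have i1: "integrable (measure_pmf ?D) ?h1"
  proof (rule integrable_bdd[where B="C * n + 1"])
    fix xs
    have "0 \<le> indicator ?A xs / real n ^ 3" by simp
    moreover have "indicator ?A xs / real n ^ 3 \<le> 1"
      using npos n_ge2 by (auto simp: indicator_def)
    ultimately show "\<bar>?h1 xs\<bar> \<le> C * n + 1" using Psi_bounds[of "last xs"] by simp
  qed
  have i2: "integrable (measure_pmf ?D) ?h2"
  proof (rule integrable_bdd[where B="C * n"])
    fix xs
    have "0 \<le> ?h2 xs \<and> ?h2 xs \<le> C * n"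
      by (rule expectation_bounds) (use Psi_bounds in auto)
    then show "\<bar>?h2 xs\<bar> \<le> C * n" by simp
  qed
  have "measure_pmf.expectation ?D ?h1 \<le> measure_pmf.expectation ?D ?h2"
  proof (rule integral_mono_AE[OF i1 i2], rule AE_pmfI)
    fix xs assume xs: "xs \<in> set_pmf ?D"
    have len: "length xs = Suc t" using paths_basic[OF xs] by simp
    have ne: "xs \<noteq> []" using len by auto
    then have lst: "last xs = xs ! t" using len by (simp add: last_conv_nth)
    have "last xs \<in> set xs" by (rule last_in_set[OF ne])
    then have "last xs \<in> Omega0 V k" using paths_om[OF M0 xs] by blast
    note dr = drift[OF this]
    have "indicator ?A xs / real n ^ 3 \<le> (if stop_ge V j (last xs) then 0 else 1 / real n ^ 3)"
      using lst by (auto simp: indicator_def)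
    then show "?h1 xs \<le> ?h2 xs" using dr by simp
  qed
  moreover have "measure_pmf.expectation ?D ?h1 = measure_pmf.expectation ?D (\<lambda>xs. Psi (last xs)) + measure_pmf.prob ?D ?A / real n ^ 3"
  proof -
    have ia: "integrable (measure_pmf ?D) (\<lambda>xs. Psi (last xs))" by (rule integrable_bdd[OF Psi_abs])
    have ib: "integrable (measure_pmf ?D) (\<lambda>xs. indicator ?A xs / real n ^ 3)"
      by (rule integrable_bdd[where B=1]) (use npos n_ge2 in \<open>auto simp: indicator_def\<close>)
    show ?thesis using Bochner_Integration.integral_add[OF ia ib] by simp
  qed
  ultimately show ?thesis using eq by simp
qed

lemma main_bound: assumes M0: "M0 \<in> Omega0 V k"
  shows "expected_A_ge V E f M0 j \<le> ennreal (C * real n * real n ^ 3)"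
proof -
  define a where "a t = measure_pmf.expectation (moran_paths V E f M0 t) (\<lambda>xs. Psi (last xs))" for t
  define pp where "pp t = measure_pmf.prob (moran_paths V E f M0 t) {xs. \<forall>s\<le>t. \<not> stop_ge V j (xs ! s)}" for t
  have npos: "0 < real n" using n_ge2 by simp
  have rec: "a t + pp t / real n ^ 3 \<le> a (Suc t)" for t using rec_step[OF M0] unfolding a_def pp_def .
  have lin: "a 0 + (\<Sum>s<t. pp s) / real n ^ 3 \<le> a t" for t
  proof (induction t)
    case 0 then show ?case by simp
  next
    case (Suc t)
    then show ?case using rec[of t] by (simp add: add_divide_distrib)
  qed
  have abnd: "0 \<le> a t \<and> a t \<le> C * n" for t
    unfolding a_def by (rule expectation_bounds) (use Psi_bounds in auto)
  have pnn: "0 \<le> pp t" for t unfolding pp_def by simp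
  have ps: "(\<Sum>s<t. pp s) \<le> C * real n * real n ^ 3" for t
  proof -
    have "(\<Sum>s<t. pp s) / real n ^ 3 \<le> C * n" using lin[of t] abnd[of 0] abnd[of t] by linarith
    then show ?thesis using npos by (simp add: divide_le_eq mult.assoc)
  qed
  have sm: "summable pp"
  proof (rule bounded_imp_summable[where B="C * real n * real n ^ 3"])
    show "0 \<le> pp t" for t by (rule pnn)
    show "(\<Sum>s\<le>t. pp s) \<le> C * real n * real n ^ 3" for t
      using ps[of "Suc t"] by (simp only: lessThan_Suc_atMost)
  qed
  have "expected_A_ge V E f M0 j = (\<Sum>t. ennreal (pp t))" unfolding expected_A_ge_def pp_def ..
  also have "\<dots> = ennreal (\<Sum>t. pp t)" by (rule suminf_ennreal2[OF pnn sm])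
  also have "\<dots> \<le> ennreal (C * real n * real n ^ 3)"
    by (rule ennreal_leI, rule suminf_le_const[OF sm ps])
  finally show ?thesis .
qed

end

theorem lemma17:
  fixes V :: "'a set" and E :: "'a \<Rightarrow> 'a \<Rightarrow> bool" and k n j :: nat
    and f :: "nat \<Rightarrow> rat" and M0 :: "'a \<Rightarrow> nat"
  assumes "simple_graph V E" and "connected_graph V E" and "n = card V"
    and "k \<ge> 1"
    and "\<forall>i\<in>{1..k}. f i \<ge> 1"
    and "\<forall>i. 1 \<le> i \<and> i < k \<longrightarrow> f i < f (i + 1)"
    and "M0 \<in> Omega0 V k"
    and "j \<in> {2..k}"
  shows "expected_A_ge V E f M0 j
           \<le> ennreal ((\<Sum>i=j..k. real_of_rat (f i / (f i - f (i - 1)))) * (real n + 1) * real n ^ 3)"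
proof (cases "2 \<le> card V")
  case True
  interpret moran V E k j f
    by (rule moran.intro) (use assms True in simp_all)
  have "expected_A_ge V E f M0 j \<le> ennreal (C * real n * real n ^ 3)"
    using main_bound[OF assms(7)] assms(3) n_def by simp
  also have "\<dots> \<le> ennreal (C * (real n + 1) * real n ^ 3)"
  proof (rule ennreal_leI)
    have "C * real n \<le> C * (real n + 1)" using C_nonneg by (simp add: mult_left_mono)
    then show "C * real n * real n ^ 3 \<le> C * (real n + 1) * real n ^ 3"
      by (rule mult_right_mono) simp
  qed
  finally show ?thesis by (simp add: C_def c_def)
next
  case False
  have fin: "finite V" using assms(1) unfolding simple_graph_def by blast
  have ne: "V \<noteq> {}" using assms(2) unfolding connected_graph_def by blast
  have "card V \<noteq> 0" using fin ne by simp
  then have "card V = 1" using False by linarith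
  then obtain x where V: "V = {x}" by (auto simp: card_Suc_eq)
  have st: "stop_ge V j M0"
  proof (cases "j \<le> M0 x")
    case True
    then show ?thesis unfolding stop_ge_def V by (intro disjI2 exI[of _ "M0 x"]) auto
  next
    case False
    then show ?thesis unfolding stop_ge_def V by auto
  qed
  have "measure_pmf.prob (moran_paths V E f M0 t) {xs. \<forall>s\<le>t. \<not> stop_ge V j (xs ! s)} = 0" for t
    unfolding measure_pmf_zero_iff
  proof (rule equals0I)
    fix xs assume "xs \<in> set_pmf (moran_paths V E f M0 t) \<inter> {xs. \<forall>s\<le>t. \<not> stop_ge V j (xs ! s)}"
    then have xs: "xs \<in> set_pmf (moran_paths V E f M0 t)" and A: "\<forall>s\<le>t. \<not> stop_ge V j (xs ! s)" by auto
    have "xs ! 0 = M0" using paths_basic[OF xs] by simp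
    moreover have "\<not> stop_ge V j (xs ! 0)" using A by simp
    ultimately show False using st by simp
  qed
  then have "expected_A_ge V E f M0 j = 0" unfolding expected_A_ge_def by simp
  then show ?thesis by simp
qed

end
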